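(* Consider the input-delay system $\dot x(t)=f(x(t))+g(x(t))u(t-\tau)$ with $\tau>0$, and let $h:X\to\mathbb{R}$ be continuously differentiable with safe set $S=\{x\in X:h(x)\ge0\}$. Suppose $h$ is a control barrier function for this delay system with extended class $\mathcal{K}$ function $\alpha$, and suppose Assumption 1 holds: the initial input history $u_0$ satisfies $\Psi(\vartheta,x_0,u_0)\in S$ for all $\vartheta\in[0,\tau]$. Then any locally Lipschitz continuous controller $u(t)=k(x_{\rm p}(t))$, $x_{\rm p}(t)=\Psi(\tau,x(t),u_t)$, satisfying $$\dot h(x_{\rm p},u)\ge-\alpha(h(x_{\rm p}))\quad\text{for all }x\in S,\ u_t\in\mathcal{B},\ \text{where } x_{\rm p}=\Psi(\tau,x,u_t),$$ renders $S$ forward invariant: $x_0\in S\Rightarrow x(t)\in S$ for all $t\ge0$.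
   Context: $X\subseteq\mathbb{R}^n$ open and connected, $U\subseteq\mathbb{R}^m$, $f:X\to\mathbb{R}^n$, $g:X\to\mathbb{R}^{n\times m}$ locally Lipschitz; $u$ bounded and continuous almost everywhere; solutions assumed to exist uniquely for all $t\ge0$. $\mathcal{B}$ is the space of functions $[-\tau,0)\to U$ that are bounded and continuous almost everywhere; the input history is $u_t\in\mathcal{B}$, $u_t(\theta)=u(t+\theta)$, $\theta\in[-\tau,0)$. The semi-flow $\Psi:[0,\tau]\times X\times\mathcal{B}\to X$ is defined by $\Psi(\vartheta,x,u_t)=x+\int_0^\vartheta\big(f(\Psi(\varphi,x,u_t))+g(\Psi(\varphi,x,u_t))u_t(\varphi-\tau)\big)d\varphi$, so that $x(t+\vartheta)=\Psi(\vartheta,x(t),u_t)$. Notation $\dot h(x,u)=\nabla h(x)(f(x)+g(x)u)$. Extended class $\mathcal{K}$ function: continuous strictly increasing $\alpha:(-a,b)\to\mathbb{R}$, $a,b>0$, $\alpha(0)=0$. Definition: $h$ is a CBF for the delay system with $\tau>0$ if there exists an extended class $\mathcal{K}$ function $\alpha$ such that for all $x\in S$ and $u_t\in\mathcal{B}$, $\sup_{u\in U}\dot h(x_{\rm p},u)\ge-\alpha(h(x_{\rm p}))$ with $x_{\rm p}=\Psi(\tau,x,u_t)$. *)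

theory Defs
  imports "HOL-Analysis.Analysis"
begin

definition loc_lipschitz_on :: "'a::metric_space set \<Rightarrow> ('a \<Rightarrow> 'b::metric_space) \<Rightarrow> bool" where
  "loc_lipschitz_on A F \<longleftrightarrow> (\<forall>x\<in>A. \<exists>r>0. \<exists>L. L-lipschitz_on (cball x r \<inter> A) F)"

definition ext_class_K :: "ereal \<Rightarrow> ereal \<Rightarrow> (real \<Rightarrow> real) \<Rightarrow> bool" where
  "ext_class_K a b \<alpha> \<longleftrightarrow> a > 0 \<and> b > 0 \<and>
     continuous_on {r. - a < ereal r \<and> ereal r < b} \<alpha> \<and>
     strict_mono_on {r. - a < ereal r \<and> ereal r < b} \<alpha> \<and> \<alpha> 0 = 0"

definition hist :: "(real \<Rightarrow> 'b) \<Rightarrow> real \<Rightarrow> real \<Rightarrow> 'b" where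
  "hist u t = (\<lambda>\<theta>. u (t + \<theta>))"

definition Bset :: "real \<Rightarrow> 'b::real_normed_vector set \<Rightarrow> (real \<Rightarrow> 'b) set" where
  "Bset \<tau> U = {w. (\<forall>\<theta>\<in>{-\<tau>..<0}. w \<theta> \<in> U) \<and> bounded (w ` {-\<tau>..<0}) \<and>
                   (AE \<theta> in lborel. \<theta> \<in> {-\<tau><..<0} \<longrightarrow> isCont w \<theta>)}"

definition psi_sol :: "(real^'n) set \<Rightarrow> (real^'n \<Rightarrow> real^'n) \<Rightarrow> (real^'n \<Rightarrow> real^'m^'n) \<Rightarrow> real
     \<Rightarrow> real^'n \<Rightarrow> (real \<Rightarrow> real^'m) \<Rightarrow> (real \<Rightarrow> real^'n) \<Rightarrow> bool" where
  "psi_sol X f g \<tau> x w p \<longleftrightarrow> (\<forall>\<sigma>\<in>{0..\<tau>}. p \<sigma> \<in> X \<and>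
      ((\<lambda>\<phi>. f (p \<phi>) + g (p \<phi>) *v w (\<phi> - \<tau>)) has_integral (p \<sigma> - x)) {0..\<sigma>})"

definition Psi :: "(real^'n) set \<Rightarrow> (real^'n \<Rightarrow> real^'n) \<Rightarrow> (real^'n \<Rightarrow> real^'m^'n) \<Rightarrow> real
     \<Rightarrow> real \<Rightarrow> real^'n \<Rightarrow> (real \<Rightarrow> real^'m) \<Rightarrow> real^'n" where
  "Psi X f g \<tau> \<sigma> x w = (THE y. \<exists>p. psi_sol X f g \<tau> x w p \<and> p \<sigma> = y)"

definition hdot :: "(real^'n \<Rightarrow> real^'n) \<Rightarrow> (real^'n \<Rightarrow> real^'n) \<Rightarrow> (real^'n \<Rightarrow> real^'m^'n)
     \<Rightarrow> real^'n \<Rightarrow> real^'m \<Rightarrow> real" where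
  "hdot Dh f g x v = Dh x \<bullet> (f x + g x *v v)"

end

theory Submission
  imports Defs
begin


lemma matvec_bound:
  fixes A :: "real^'m^'n" and v :: "real^'m"
  shows "norm (A *v v) \<le> real CARD('n) * norm A * norm v"
proof -
  have "norm (A *v v) \<le> (\<Sum>i\<in>UNIV. \<bar>(A *v v) $ i\<bar>)" by (rule norm_le_l1_cart)
  also have "\<dots> \<le> (\<Sum>i\<in>(UNIV::'n set). norm A * norm v)"
  proof (rule sum_mono)
    fix i :: 'n
    have "\<bar>(A *v v) $ i\<bar> = \<bar>A $ i \<bullet> v\<bar>" by (simp add: matrix_mult_dot)
    also have "\<dots> \<le> norm (A $ i) * norm v" by (rule Cauchy_Schwarz_ineq2)
    also have "\<dots> \<le> norm A * norm v" by (rule mult_right_mono[OF Finite_Cartesian_Product.norm_nth_le norm_ge_zero])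
    finally show "\<bar>(A *v v) $ i\<bar> \<le> norm A * norm v" .
  qed
  also have "\<dots> = real CARD('n) * norm A * norm v" by simp
  finally show ?thesis .
qed

lemma loc_lip_cont:
  assumes "open X" "loc_lipschitz_on X F"
  shows "continuous_on X F"
proof (rule continuous_at_imp_continuous_on, rule ballI)
  fix y assume y: "y \<in> X"
  then obtain r L where r: "r > 0" and L: "L-lipschitz_on (cball y r \<inter> X) F"
    using assms(2) unfolding loc_lipschitz_on_def by blast
  have "continuous_on (cball y r \<inter> X) F" using L by (rule lipschitz_on_continuous_on)
  moreover have "y \<in> interior (cball y r \<inter> X)"
  proof -
    have "ball y r \<inter> X \<subseteq> cball y r \<inter> X" by auto
    moreover have "open (ball y r \<inter> X)" using assms(1) by auto
    moreover have "y \<in> ball y r \<inter> X" using y r by auto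
    ultimately show ?thesis by (meson interior_maximal subsetD)
  qed
  ultimately show "isCont F y" by (rule continuous_on_interior)
qed

lemma psi_sol_between:
  assumes "psi_sol X f g \<tau> y w p" "0 \<le> s" "s \<le> \<sigma>" "\<sigma> \<le> \<tau>"
  shows "((\<lambda>\<phi>. f (p \<phi>) + g (p \<phi>) *v w (\<phi> - \<tau>)) has_integral (p \<sigma> - p s)) {s..\<sigma>}"
proof -
  let ?F = "\<lambda>\<phi>. f (p \<phi>) + g (p \<phi>) *v w (\<phi> - \<tau>)"
  have all: "\<forall>\<sigma>\<in>{0..\<tau>}. p \<sigma> \<in> X \<and> (?F has_integral (p \<sigma> - y)) {0..\<sigma>}"
    using assms(1) unfolding psi_sol_def .
  have "\<sigma> \<in> {0..\<tau>}" "s \<in> {0..\<tau>}" using assms(2-4) by simp_all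
  then have i1: "(?F has_integral (p \<sigma> - y)) {0..\<sigma>}" and i2: "(?F has_integral (p s - y)) {0..s}"
    using all by blast+
  have int: "?F integrable_on {0..\<sigma>}" using i1 by blast
  have "integral {0..s} ?F + integral {s..\<sigma>} ?F = integral {0..\<sigma>} ?F"
    by (rule Henstock_Kurzweil_Integration.integral_combine[OF assms(2) assms(3) int])
  then have "integral {s..\<sigma>} ?F = p \<sigma> - p s"
    using integral_unique[OF i1] integral_unique[OF i2] by (simp add: algebra_simps)
  moreover have "?F integrable_on {s..\<sigma>}"
    by (rule integrable_subinterval_real[OF int]) (use assms(2) in simp)
  ultimately show ?thesis using integrable_integral by fastforce
qed




lemma psi_sol_cont:
  assumes "psi_sol X f g \<tau> y w p" "0 \<le> \<tau>"
  shows "continuous_on {0..\<tau>} p" "p 0 = y"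
proof -
  let ?F = "\<lambda>\<phi>. f (p \<phi>) + g (p \<phi>) *v w (\<phi> - \<tau>)"
  have all: "\<forall>\<sigma>\<in>{0..\<tau>}. p \<sigma> \<in> X \<and> (?F has_integral (p \<sigma> - y)) {0..\<sigma>}"
    using assms(1) unfolding psi_sol_def .
  have eq: "p \<sigma> = y + integral {0..\<sigma>} ?F" if "\<sigma> \<in> {0..\<tau>}" for \<sigma>
  proof -
    have "(?F has_integral (p \<sigma> - y)) {0..\<sigma>}" using all that by blast
    then have "integral {0..\<sigma>} ?F = p \<sigma> - y" by (rule integral_unique)
    then show ?thesis by simp
  qed
  have "(?F has_integral (p \<tau> - y)) {0..\<tau>}" using all assms(2) by simp
  then have int: "?F integrable_on {0..\<tau>}" by blast
  have "continuous_on {0..\<tau>} (\<lambda>\<sigma>. y + integral {0..\<sigma>} ?F)"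
    by (rule continuous_on_add[OF continuous_on_const indefinite_integral_continuous_1[OF int]])
  moreover have "\<And>\<sigma>. \<sigma> \<in> {0..\<tau>} \<Longrightarrow> p \<sigma> = y + integral {0..\<sigma>} ?F" by (rule eq)
  ultimately show "continuous_on {0..\<tau>} p" by (metis (no_types, lifting) continuous_on_eq)
  show "p 0 = y" using eq[of 0] assms(2) by simp
qed

lemma psi_unique:
  fixes X :: "(real^'n) set" and f :: "real^'n \<Rightarrow> real^'n" and g :: "real^'n \<Rightarrow> real^'m^'n"
  assumes lf: "loc_lipschitz_on X f" and lg: "loc_lipschitz_on X g" and tau: "0 < \<tau>"
    and wb: "\<forall>\<theta>\<in>{-\<tau>..0}. norm (w \<theta>) \<le> M"
    and P: "psi_sol X f g \<tau> y w p" and Q: "psi_sol X f g \<tau> y w q"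
  shows "\<forall>\<sigma>\<in>{0..\<tau>}. p \<sigma> = q \<sigma>"
proof (rule ccontr)
  assume neg: "\<not> (\<forall>\<sigma>\<in>{0..\<tau>}. p \<sigma> = q \<sigma>)"
  define B where "B = {\<sigma>\<in>{0..\<tau>}. p \<sigma> \<noteq> q \<sigma>}"
  have Bne: "B \<noteq> {}" using neg B_def by auto
  have bdd: "bdd_below B" unfolding B_def by (rule bdd_belowI[of _ 0]) auto
  define s where "s = Inf B"
  have s0: "0 \<le> s" unfolding s_def by (rule cInf_greatest[OF Bne]) (auto simp: B_def)
  have pc: "continuous_on {0..\<tau>} p" and p0: "p 0 = y" using psi_sol_cont[OF P] tau by auto
  have qc: "continuous_on {0..\<tau>} q" and q0: "q 0 = y" using psi_sol_cont[OF Q] tau by auto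
  obtain b where b: "b \<in> B" using Bne by auto
  have sb: "s \<le> b" using cInf_lower[OF b bdd] s_def by simp
  have btau: "b \<le> \<tau>" using b B_def by auto
  have below: "p \<rho> = q \<rho>" if "\<rho> \<in> {0..<s}" for \<rho>
  proof (rule ccontr)
    assume "p \<rho> \<noteq> q \<rho>"
    moreover have "\<rho> \<in> {0..\<tau>}" using that sb btau by simp
    ultimately have "\<rho> \<in> B" unfolding B_def by simp
    then show False using cInf_lower[OF _ bdd] that s_def by fastforce
  qed
  define C where "C = {0..\<tau>} \<inter> (\<lambda>\<sigma>. p \<sigma> - q \<sigma>) -` {0}"
  have Ccl: "closed C" unfolding C_def
    by (rule continuous_closed_preimage) (auto intro: continuous_intros pc qc)
  have ps: "p s = q s"
  proof (cases "s = 0")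
    case True then show ?thesis using p0 q0 by simp
  next
    case False
    then have "0 < s" using s0 by simp
    have "{0..<s} \<subseteq> C" using below sb btau unfolding C_def by auto
    then have "closure {0..<s} \<subseteq> C" using Ccl by (rule closure_minimal)
    then have "s \<in> C" using \<open>0 < s\<close> by auto
    then show ?thesis unfolding C_def by simp
  qed
  have "s \<notin> B" using ps B_def by simp
  then have sltb: "s < b" using sb b by (metis order_le_less)
  then have stau: "s < \<tau>" using btau by simp
  define z where "z = p s"
  have zX: "z \<in> X" using P s0 stau unfolding psi_sol_def z_def by auto
  obtain rf Lf where rf: "rf > 0" and Lf: "Lf-lipschitz_on (cball z rf \<inter> X) f"
    using lf zX unfolding loc_lipschitz_on_def by blast
  obtain rg Lg where rg: "rg > 0" and Lg: "Lg-lipschitz_on (cball z rg \<inter> X) g"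
    using lg zX unfolding loc_lipschitz_on_def by blast
  define r where "r = min rf rg"
  have r: "r > 0" using rf rg r_def by simp
  have Lf': "Lf-lipschitz_on (cball z r \<inter> X) f"
    by (rule lipschitz_on_subset[OF Lf]) (auto simp: r_def)
  have Lg': "Lg-lipschitz_on (cball z r \<inter> X) g"
    by (rule lipschitz_on_subset[OF Lg]) (auto simp: r_def)
  have Lf0: "0 \<le> Lf" and Lg0: "0 \<le> Lg" using Lf' Lg' lipschitz_on_nonneg by blast+
  have s_in: "s \<in> {0..\<tau>}" using s0 stau by simp
  obtain d1 where d1: "d1 > 0" "\<forall>\<sigma>\<in>{0..\<tau>}. dist \<sigma> s < d1 \<longrightarrow> dist (p \<sigma>) (p s) < r"
    using pc s_in r unfolding continuous_on_iff by blast
  obtain d2 where d2: "d2 > 0" "\<forall>\<sigma>\<in>{0..\<tau>}. dist \<sigma> s < d2 \<longrightarrow> dist (q \<sigma>) (q s) < r"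
    using qc s_in r unfolding continuous_on_iff by blast
  define M' where "M' = max M 0"
  define c where "c = Lf + real CARD('n) * Lg * M'"
  have c0: "0 \<le> c" unfolding c_def M'_def using Lf0 Lg0 by simp
  define \<delta> where "\<delta> = min (min d1 d2 / 2) (min (\<tau> - s) (1 / (2 * (c + 1))))"
  have \<delta>0: "\<delta> > 0" unfolding \<delta>_def using d1 d2 stau c0 by simp
  have \<delta>c: "c * \<delta> \<le> 1/2"
  proof -
    have "\<delta> \<le> 1 / (2 * (c + 1))" unfolding \<delta>_def by simp
    then have "c * \<delta> \<le> c * (1 / (2 * (c + 1)))" using c0 by (metis mult_left_mono)
    also have "\<dots> \<le> 1/2" using c0 by (simp add: field_simps)
    finally show ?thesis .
  qed
  define I where "I = {s..s+\<delta>}"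
  have I_sub: "I \<subseteq> {0..\<tau>}" unfolding I_def \<delta>_def using s0 by auto
  have I_near: "dist \<sigma> s < min d1 d2" if "\<sigma> \<in> I" for \<sigma>
    using that \<delta>0 unfolding I_def \<delta>_def dist_real_def by auto
  let ?D = "\<lambda>\<sigma>. norm (p \<sigma> - q \<sigma>)"
  have Dc: "continuous_on I ?D"
    using continuous_on_subset[OF pc I_sub] continuous_on_subset[OF qc I_sub]
    by (intro continuous_intros)
  obtain \<sigma>m where \<sigma>m: "\<sigma>m \<in> I" "\<forall>\<sigma>\<in>I. ?D \<sigma> \<le> ?D \<sigma>m"
    using continuous_attains_sup[OF _ _ Dc] \<delta>0 unfolding I_def by fastforce
  let ?Dm = "?D \<sigma>m"
  have ptw: "norm ((f (p \<phi>) + g (p \<phi>) *v w (\<phi> - \<tau>)) - (f (q \<phi>) + g (q \<phi>) *v w (\<phi> - \<tau>))) \<le> c * ?Dm"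
    if "\<phi> \<in> I" for \<phi>
  proof -
    have \<phi>tau: "\<phi> \<in> {0..\<tau>}" using that I_sub by auto
    have pX: "p \<phi> \<in> X" using P \<phi>tau unfolding psi_sol_def by auto
    have qX: "q \<phi> \<in> X" using Q \<phi>tau unfolding psi_sol_def by auto
    have "dist (p \<phi>) z < r" using d1(2) \<phi>tau I_near[OF that] unfolding z_def by auto
    then have pB: "p \<phi> \<in> cball z r \<inter> X" using pX by (auto simp: dist_commute)
    have "dist (q \<phi>) z < r" using d2(2) \<phi>tau I_near[OF that] ps unfolding z_def by auto
    then have qB: "q \<phi> \<in> cball z r \<inter> X" using qX by (auto simp: dist_commute)
    have "\<phi> - \<tau> \<in> {-\<tau>..0}" using \<phi>tau by simp
    then have "norm (w (\<phi> - \<tau>)) \<le> M" using wb by blast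
    then have wphi: "norm (w (\<phi> - \<tau>)) \<le> M'" unfolding M'_def by simp
    have ef: "norm (f (p \<phi>) - f (q \<phi>)) \<le> Lf * ?D \<phi>"
      using lipschitz_onD[OF Lf' pB qB] by (simp add: dist_norm)
    have eg: "norm (g (p \<phi>) - g (q \<phi>)) \<le> Lg * ?D \<phi>"
      using lipschitz_onD[OF Lg' pB qB] by (simp add: dist_norm)
    have "norm ((f (p \<phi>) + g (p \<phi>) *v w (\<phi> - \<tau>)) - (f (q \<phi>) + g (q \<phi>) *v w (\<phi> - \<tau>)))
        = norm ((f (p \<phi>) - f (q \<phi>)) + (g (p \<phi>) - g (q \<phi>)) *v w (\<phi> - \<tau>))"
      by (simp add: matrix_vector_mult_diff_rdistrib algebra_simps)
    also have "\<dots> \<le> norm (f (p \<phi>) - f (q \<phi>)) + norm ((g (p \<phi>) - g (q \<phi>)) *v w (\<phi> - \<tau>))"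
      by (rule norm_triangle_ineq)
    also have "\<dots> \<le> Lf * ?D \<phi> + real CARD('n) * (Lg * ?D \<phi>) * M'"
    proof (rule add_mono[OF ef])
      have "norm ((g (p \<phi>) - g (q \<phi>)) *v w (\<phi> - \<tau>)) \<le> real CARD('n) * norm (g (p \<phi>) - g (q \<phi>)) * norm (w (\<phi> - \<tau>))"
        by (rule matvec_bound)
      also have "\<dots> \<le> real CARD('n) * (Lg * ?D \<phi>) * M'"
        by (intro mult_mono eg wphi) (auto simp: M'_def Lg0)
      finally show "norm ((g (p \<phi>) - g (q \<phi>)) *v w (\<phi> - \<tau>)) \<le> real CARD('n) * (Lg * ?D \<phi>) * M'" .
    qed
    also have "\<dots> = c * ?D \<phi>" unfolding c_def by (simp add: algebra_simps)
    also have "\<dots> \<le> c * ?Dm" using \<sigma>m(2) that c0 by (simp add: mult_left_mono)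
    finally show ?thesis .
  qed
  have bnd: "?D \<sigma> \<le> ?Dm / 2" if "\<sigma> \<in> I" for \<sigma>
  proof -
    have st: "s \<le> \<sigma>" "\<sigma> \<le> \<tau>" using that I_sub unfolding I_def by auto
    have hp: "((\<lambda>\<phi>. f (p \<phi>) + g (p \<phi>) *v w (\<phi> - \<tau>)) has_integral (p \<sigma> - p s)) {s..\<sigma>}"
      by (rule psi_sol_between[OF P s0 st])
    have hq: "((\<lambda>\<phi>. f (q \<phi>) + g (q \<phi>) *v w (\<phi> - \<tau>)) has_integral (q \<sigma> - q s)) {s..\<sigma>}"
      by (rule psi_sol_between[OF Q s0 st])
    have "((\<lambda>\<phi>. (f (p \<phi>) + g (p \<phi>) *v w (\<phi> - \<tau>)) - (f (q \<phi>) + g (q \<phi>) *v w (\<phi> - \<tau>)))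
            has_integral (p \<sigma> - q \<sigma>)) (cbox s \<sigma>)"
      using has_integral_diff[OF hp hq] ps by simp
    then have "norm (p \<sigma> - q \<sigma>) \<le> (c * ?Dm) * Henstock_Kurzweil_Integration.content (cbox s \<sigma>)"
      by (rule has_integral_bound[rotated]) (use ptw st that c0 in \<open>auto simp: I_def\<close>)
    also have "\<dots> = (c * ?Dm) * (\<sigma> - s)" using st by simp
    also have "\<dots> \<le> (c * ?Dm) * \<delta>" using that c0 unfolding I_def
      by (intro mult_left_mono) auto
    also have "\<dots> = (c * \<delta>) * ?Dm" by simp
    also have "\<dots> \<le> 1/2 * ?Dm" using \<delta>c by (rule mult_right_mono) simp
    finally show ?thesis by simp
  qed
  have "?Dm \<le> ?Dm / 2" using bnd[OF \<sigma>m(1)] .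
  then have Dm0: "?Dm = 0" by simp
  have eqI: "p \<sigma> = q \<sigma>" if "\<sigma> \<in> I" for \<sigma>
    using \<sigma>m(2) that Dm0 by (metis norm_le_zero_iff eq_iff_diff_eq_0)
  have "s + \<delta> \<le> s" unfolding s_def
  proof (rule cInf_greatest[OF Bne])
    fix x assume x: "x \<in> B"
    then have "s \<le> x" using cInf_lower[OF x bdd] s_def by simp
    moreover have "x \<notin> I" using x eqI B_def by auto
    ultimately show "Inf B + \<delta> \<le> x" unfolding I_def s_def by auto
  qed
  then show False using \<delta>0 by simp
qed




lemma ftc_comp:
  fixes x F :: "real \<Rightarrow> real^'n" and h :: "real^'n \<Rightarrow> real" and Dh :: "real^'n \<Rightarrow> real^'n"
  assumes ab: "a < b"
    and xF: "\<forall>t\<in>{a..b}. (F has_integral (x t - x a)) {a..t}"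
    and Fb: "\<forall>t\<in>{a..b}. norm (F t) \<le> B"
    and hd: "\<forall>t\<in>{a..b}. (h has_derivative (\<lambda>v. Dh (x t) \<bullet> v)) (at (x t))"
    and Dc: "continuous_on {a..b} (\<lambda>t. Dh (x t))"
  shows "((\<lambda>t. Dh (x t) \<bullet> F t) has_integral (h (x b) - h (x a))) {a..b}"
proof -
  let ?G = "\<lambda>t. Dh (x t) \<bullet> F t"
  have "norm (F a) \<le> B" using Fb ab by simp
  then have B0: "0 \<le> B" by (rule order_trans[OF norm_ge_zero])
  have xFb: "(F has_integral (x b - x a)) {a..b}" using xF ab by simp
  then have int: "F integrable_on {a..b}" by blast
  have xeq: "x t = x a + integral {a..t} F" if "t \<in> {a..b}" for t
  proof -
    have "(F has_integral (x t - x a)) {a..t}" using xF that by blast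
    then have "integral {a..t} F = x t - x a" by (rule integral_unique)
    then show ?thesis by simp
  qed
  have betw: "(F has_integral (x t - x s)) {s..t}" if "a \<le> s" "s \<le> t" "t \<le> b" for s t
  proof -
    have "t \<in> {a..b}" using that by simp
    then have "(F has_integral (x t - x a)) {a..t}" using xF by blast
    then have intt: "F integrable_on {a..t}" by blast
    have "integral {a..s} F + integral {s..t} F = integral {a..t} F"
      by (rule Henstock_Kurzweil_Integration.integral_combine[OF that(1) that(2) intt])
    then have "integral {s..t} F = x t - x s" using xeq[of s] xeq[of t] that by (simp add: algebra_simps)
    moreover have "F integrable_on {s..t}"
      by (rule integrable_subinterval_real[OF intt]) (use that in simp)
    ultimately show ?thesis using integrable_integral by fastforce
  qed
  have lip1: "norm (x t - x s) \<le> B * (t - s)" if "a \<le> s" "s \<le> t" "t \<le> b" for s t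
  proof -
    have "(F has_integral (x t - x s)) (cbox s t)" using betw[OF that] by simp
    then have "norm (x t - x s) \<le> B * Henstock_Kurzweil_Integration.content (cbox s t)"
      by (rule has_integral_bound[rotated]) (use B0 Fb that in auto)
    then show ?thesis using that by simp
  qed
  have lip: "norm (x t - x s) \<le> B * \<bar>t - s\<bar>" if "s \<in> {a..b}" "t \<in> {a..b}" for s t
  proof (cases "s \<le> t")
    case True then show ?thesis using lip1[of s t] that by simp
  next
    case False then show ?thesis using lip1[of t s] that by (simp add: norm_minus_commute)
  qed
  have xc: "continuous_on {a..b} x"
  proof -
    have "continuous_on {a..b} (\<lambda>t. x a + integral {a..t} F)"
      by (rule continuous_on_add[OF continuous_on_const indefinite_integral_continuous_1[OF int]])
    then show ?thesis using xeq by (metis (no_types, lifting) continuous_on_eq)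
  qed
  have Fabs: "F absolutely_integrable_on {a..b}"
  proof (rule absolutely_integrable_integrable_bound[where g="\<lambda>_. B"])
    show "\<And>t. t \<in> {a..b} \<Longrightarrow> norm (F t) \<le> B" using Fb by blast
  qed (rule int, rule integrable_const_ivl)
  have bil: "bilinear ((\<bullet>) :: real^'n \<Rightarrow> real^'n \<Rightarrow> real)"
    by (rule bilinear_conv_bounded_bilinear[THEN iffD2, OF bounded_bilinear_inner])
  have meas: "(\<lambda>t. Dh (x t)) \<in> borel_measurable (lebesgue_on {a..b})"
    by (rule continuous_imp_measurable_on_sets_lebesgue[OF Dc]) simp
  have bnd: "bounded ((\<lambda>t. Dh (x t)) ` {a..b})"
    by (rule compact_imp_bounded[OF compact_continuous_image[OF Dc compact_Icc]])
  have "?G absolutely_integrable_on {a..b}"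
    by (rule absolutely_integrable_bounded_measurable_product[OF bil meas _ bnd Fabs]) simp
  then have Gint: "?G integrable_on {a..b}" by (simp add: absolutely_integrable_on_def)
  have hc: "continuous_on {a..b} (\<lambda>t. h (x t))"
  proof -
    have "continuous_on (x ` {a..b}) h"
    proof (rule continuous_at_imp_continuous_on, rule ballI)
      fix z assume "z \<in> x ` {a..b}"
      then obtain t where "t \<in> {a..b}" "z = x t" by blast
      then show "isCont h z" using hd has_derivative_continuous by blast
    qed
    then show ?thesis using continuous_on_compose[OF xc] by (simp add: comp_def)
  qed
  define K where "K t = h (x t) - integral {a..t} ?G" for t
  have Kc: "continuous_on {a..b} K" unfolding K_def
    by (rule continuous_on_diff[OF hc indefinite_integral_continuous_1[OF Gint]])
  have Kd: "DERIV K r :> 0" if r: "a < r" "r < b" for r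
  proof -
    define c where "c = Dh (x r)"
    define \<Phi> where "\<Phi> \<phi> = c \<bullet> F \<phi> - ?G \<phi>" for \<phi>
    have rab: "r \<in> {a..b}" using r by simp
    have cF: "((\<lambda>\<phi>. c \<bullet> F \<phi>) has_integral c \<bullet> (x t - x a)) {a..t}" if "t \<in> {a..b}" for t
      using has_integral_linear[OF _ bounded_linear_inner_right, of F "x t - x a" "{a..t}" c] xF that
      by (simp add: comp_def)
    have Gint_t: "?G integrable_on {a..t}" if "t \<in> {a..b}" for t
      by (rule integrable_subinterval_real[OF Gint]) (use that in simp)
    have \<Phi>int_eq: "integral {a..t} \<Phi> = c \<bullet> (x t - x a) - integral {a..t} ?G" if "t \<in> {a..b}" for t
    proof -
      have "(\<Phi> has_integral (c \<bullet> (x t - x a) - integral {a..t} ?G)) {a..t}"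
        unfolding \<Phi>_def by (rule has_integral_diff[OF cF[OF that] integrable_integral[OF Gint_t[OF that]]])
      then show ?thesis by (rule integral_unique)
    qed
    have \<Phi>int: "\<Phi> integrable_on {a..b}"
      unfolding \<Phi>_def using cF[of b] ab Gint by (intro integrable_diff) auto
    have Keq: "K t = (h (x t) - c \<bullet> x t) + c \<bullet> x a + integral {a..t} \<Phi>" if "t \<in> {a<..<b}" for t
      using \<Phi>int_eq[of t] that unfolding K_def by (simp add: inner_diff_right)
    have \<Phi>r: "\<Phi> r = 0" unfolding \<Phi>_def c_def by simp
    have \<Phi>cont: "continuous (at r within ({a..b} - {})) \<Phi>"
      unfolding continuous_within_eps_delta
    proof (intro allI impI)
      fix e :: real assume e: "e > 0"
      have "continuous (at r within {a..b}) (\<lambda>t. Dh (x t))"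
        using Dc rab continuous_on_eq_continuous_within by blast
      moreover have e': "e / (B + 1) > 0" using e B0 by simp
      ultimately obtain d where d: "d > 0" "\<forall>t\<in>{a..b}. dist t r < d \<longrightarrow> dist (Dh (x t)) (Dh (x r)) < e / (B + 1)"
        unfolding continuous_within_eps_delta by blast
      show "\<exists>d>0. \<forall>t\<in>{a..b} - {}. dist t r < d \<longrightarrow> dist (\<Phi> t) (\<Phi> r) < e"
      proof (intro exI[of _ d] conjI ballI impI)
        fix t assume t: "t \<in> {a..b} - {}" "dist t r < d"
        have "\<bar>\<Phi> t\<bar> = \<bar>(c - Dh (x t)) \<bullet> F t\<bar>" unfolding \<Phi>_def by (simp add: inner_diff_left)
        also have "\<dots> \<le> norm (c - Dh (x t)) * norm (F t)" by (rule Cauchy_Schwarz_ineq2)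
        also have "\<dots> \<le> (e / (B + 1)) * B"
        proof (rule mult_mono)
          show "norm (c - Dh (x t)) \<le> e / (B + 1)"
          proof -
            have "dist (Dh (x t)) (Dh (x r)) < e / (B + 1)" using d(2) t by blast
            then show ?thesis unfolding c_def by (simp add: dist_norm norm_minus_commute)
          qed
          show "norm (F t) \<le> B" using Fb t by simp
        qed (use e B0 in auto)
        also have "\<dots> < e" using e B0 by (simp add: field_simps)
        finally show "dist (\<Phi> t) (\<Phi> r) < e" using \<Phi>r by (simp add: dist_real_def)
      qed (use d in auto)
    qed
    have D2: "DERIV (\<lambda>t. integral {a..t} \<Phi>) r :> 0"
    proof -
      have "((\<lambda>t. integral {a..t} \<Phi>) has_vector_derivative \<Phi> r) (at r within ({a..b} - {}))"
        by (rule integral_has_vector_derivative_continuous_at[OF \<Phi>int _ _ \<Phi>cont]) (use rab in auto)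
      then show ?thesis using at_within_Icc_at[OF r] \<Phi>r
        by (simp add: has_real_derivative_iff_has_vector_derivative)
    qed
    have D1: "DERIV (\<lambda>t. h (x t) - c \<bullet> x t) r :> 0"
    proof -
      have hdr: "(h has_derivative (\<lambda>v. c \<bullet> v)) (at (x r))" using hd rab unfolding c_def by blast
      have "((\<lambda>t. h (x t) - c \<bullet> x t) has_derivative (\<lambda>_. 0)) (at r)"
        unfolding has_derivative_at_alt
      proof (intro conjI allI impI)
        show "bounded_linear (\<lambda>_::real. 0::real)" by simp
        fix e :: real assume e: "e > 0"
        have e': "e / (B + 1) > 0" using e B0 by simp
        obtain d' where d': "d' > 0" "\<forall>z. norm (z - x r) < d' \<longrightarrow> norm (h z - h (x r) - c \<bullet> (z - x r)) \<le> e / (B + 1) * norm (z - x r)"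
          using hdr e' unfolding has_derivative_at_alt by blast
        define d where "d = min (min (r - a) (b - r)) (d' / (B + 1))"
        have d0: "d > 0" unfolding d_def using r d' B0 by simp
        show "\<exists>d>0. \<forall>y. norm (y - r) < d \<longrightarrow>
             norm (h (x y) - c \<bullet> x y - (h (x r) - c \<bullet> x r) - 0) \<le> e * norm (y - r)"
        proof (intro exI[of _ d] conjI allI impI d0)
          fix y :: real assume y: "norm (y - r) < d"
          have yab: "y \<in> {a..b}" using y unfolding d_def by auto
          have nx: "norm (x y - x r) \<le> B * \<bar>y - r\<bar>" by (rule lip[OF rab yab])
          have "B * \<bar>y - r\<bar> < d'"
          proof -
            have "B * \<bar>y - r\<bar> \<le> B * (d' / (B + 1))" using y B0 unfolding d_def
              by (intro mult_left_mono) auto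
            also have "\<dots> < d'" using d' B0 by (simp add: field_simps)
            finally show ?thesis .
          qed
          then have "norm (x y - x r) < d'" using nx by simp
          then have "norm (h (x y) - h (x r) - c \<bullet> (x y - x r)) \<le> e / (B + 1) * norm (x y - x r)"
            using d'(2) by blast
          also have "\<dots> \<le> e / (B + 1) * (B * \<bar>y - r\<bar>)" using nx e' by (intro mult_left_mono) auto
          also have "\<dots> \<le> e * \<bar>y - r\<bar>"
          proof -
            have "e / (B + 1) * B \<le> e" using e B0 by (simp add: field_simps)
            then show ?thesis by (metis abs_ge_zero mult.assoc mult_right_mono)
          qed
          finally show "norm (h (x y) - c \<bullet> x y - (h (x r) - c \<bullet> x r) - 0) \<le> e * norm (y - r)"
            by (simp add: inner_diff_right algebra_simps)
        qed
      qed
      then show ?thesis unfolding has_field_derivative_def by (simp add: mult_zero_left[abs_def])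
    qed
    have "DERIV (\<lambda>t. (h (x t) - c \<bullet> x t) + c \<bullet> x a + integral {a..t} \<Phi>) r :> 0 + 0 + 0"
      by (intro DERIV_add D1 D2 DERIV_const)
    then have "DERIV (\<lambda>t. (h (x t) - c \<bullet> x t) + c \<bullet> x a + integral {a..t} \<Phi>) r :> 0" by simp
    then show ?thesis
      by (rule has_field_derivative_transform_within_open[where S="{a<..<b}"]) (use r Keq in auto)
  qed
  have "K b = K a" by (rule DERIV_isconst_end[OF ab Kc Kd])
  then have "integral {a..b} ?G = h (x b) - h (x a)" unfolding K_def by simp
  then show ?thesis using integrable_integral[OF Gint] by simp
qed




theorem theorem3:
  fixes X :: "(real^'n) set" and U :: "(real^'m) set"
    and f :: "real^'n \<Rightarrow> real^'n" and g :: "real^'n \<Rightarrow> real^'m^'n"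
    and h :: "real^'n \<Rightarrow> real" and Dh :: "real^'n \<Rightarrow> real^'n"
    and \<tau> :: real and \<alpha> :: "real \<Rightarrow> real" and a b :: ereal
    and k :: "real^'n \<Rightarrow> real^'m"
    and x :: "real \<Rightarrow> real^'n" and u :: "real \<Rightarrow> real^'m" and x0 :: "real^'n"
    and S :: "(real^'n) set"
  assumes X: "open X" "connected X"
    and fg: "loc_lipschitz_on X f" "loc_lipschitz_on X g"
    and tau: "\<tau> > 0"
    and h_C1: "\<forall>y\<in>X. (h has_derivative (\<lambda>v. Dh y \<bullet> v)) (at y)" "continuous_on X Dh"
    and S_def: "S = {y\<in>X. h y \<ge> 0}"
    \<comment> \<open>standing assumption: the semi-flow Psi exists uniquely on [0,tau]\<close>
    and Psi_wp: "\<forall>y\<in>X. \<forall>w\<in>Bset \<tau> U. (\<exists>p. psi_sol X f g \<tau> y w p) \<and>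
                   (\<forall>p q. psi_sol X f g \<tau> y w p \<longrightarrow> psi_sol X f g \<tau> y w q \<longrightarrow>
                          (\<forall>\<sigma>\<in>{0..\<tau>}. p \<sigma> = q \<sigma>))"
    \<comment> \<open>h is a CBF for the delay system with extended class K function alpha\<close>
    and alpha: "ext_class_K a b \<alpha>"
    and CBF: "\<forall>y\<in>S. \<forall>w\<in>Bset \<tau> U.
                (SUP v\<in>U. ereal (hdot Dh f g (Psi X f g \<tau> \<tau> y w) v))
                  \<ge> ereal (- \<alpha> (h (Psi X f g \<tau> \<tau> y w)))"
    \<comment> \<open>locally Lipschitz controller satisfying the CBF condition\<close>
    and k_lip: "loc_lipschitz_on X k" and k_U: "\<forall>y\<in>X. k y \<in> U"
    and k_cbf: "\<forall>y\<in>S. \<forall>w\<in>Bset \<tau> U.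
                hdot Dh f g (Psi X f g \<tau> \<tau> y w) (k (Psi X f g \<tau> \<tau> y w))
                  \<ge> - \<alpha> (h (Psi X f g \<tau> \<tau> y w))"
    \<comment> \<open>closed-loop solution: input history u_0 in B, u bounded and a.e. continuous\<close>
    and u0: "hist u 0 \<in> Bset \<tau> U"
    and u_bdd: "bounded (u ` {-\<tau>..})"
    and u_aec: "AE t in lborel. t \<in> {-\<tau><..} \<longrightarrow> isCont u t"
    and x_init: "x 0 = x0"
    and x_in: "\<forall>t\<ge>0. x t \<in> X"
    and x_sol: "\<forall>t\<ge>0. ((\<lambda>s. f (x s) + g (x s) *v u (s - \<tau>)) has_integral (x t - x0)) {0..t}"
    and u_fb: "\<forall>t\<ge>0. u t = k (Psi X f g \<tau> \<tau> (x t) (hist u t))"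
    \<comment> \<open>Assumption 1\<close>
    and assm1: "\<forall>\<sigma>\<in>{0..\<tau>}. Psi X f g \<tau> \<sigma> x0 (hist u 0) \<in> S"
    and x0S: "x0 \<in> S"
  shows "\<forall>t\<ge>0. x t \<in> S"
proof -
  let ?F = "\<lambda>s. f (x s) + g (x s) *v u (s - \<tau>)"
  let ?H = "\<lambda>t. h (x t)"
  obtain M where M: "\<forall>z\<in>u ` {-\<tau>..}. norm z \<le> M" using u_bdd unfolding bounded_iff by blast
  have Mu: "norm (u t) \<le> M" if "-\<tau> \<le> t" for t using M that by simp
  have hb: "\<forall>\<theta>\<in>{-\<tau>..0}. norm (hist u r \<theta>) \<le> M" if "0 \<le> r" for r
    unfolding hist_def using Mu that by simp
  have betw: "(?F has_integral (x t - x s)) {s..t}" if st: "0 \<le> s" "s \<le> t" for s t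
  proof -
    have i1: "(?F has_integral (x t - x0)) {0..t}" using x_sol st by simp
    have i2: "(?F has_integral (x s - x0)) {0..s}" using x_sol st by simp
    have int: "?F integrable_on {0..t}" using i1 by blast
    have "integral {0..s} ?F + integral {s..t} ?F = integral {0..t} ?F"
      by (rule Henstock_Kurzweil_Integration.integral_combine[OF st int])
    then have "integral {s..t} ?F = x t - x s"
      using integral_unique[OF i1] integral_unique[OF i2] by (simp add: algebra_simps)
    moreover have "?F integrable_on {s..t}"
      by (rule integrable_subinterval_real[OF int]) (use st in simp)
    ultimately show ?thesis using integrable_integral by fastforce
  qed
  have psol: "psi_sol X f g \<tau> (x r) (hist u r) (\<lambda>\<sigma>. x (r + \<sigma>))" if r: "0 \<le> r" for r
    unfolding psi_sol_def
  proof (intro ballI conjI)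
    fix \<sigma> assume \<sigma>: "\<sigma> \<in> {0..\<tau>}"
    show "x (r + \<sigma>) \<in> X" using x_in r \<sigma> by simp
    have "(?F has_integral (x (r + \<sigma>) - x r)) {r..r + \<sigma>}" by (rule betw) (use r \<sigma> in auto)
    then have "((\<lambda>\<phi>. ?F (\<phi> + r)) has_integral (x (r + \<sigma>) - x r)) {r - r..r + \<sigma> - r}"
      by (rule has_integral_shift_real_ivl)
    then have "((\<lambda>\<phi>. ?F (\<phi> + r)) has_integral (x (r + \<sigma>) - x r)) {0..\<sigma>}" by simp
    then show "((\<lambda>\<phi>. f (x (r + \<phi>)) + g (x (r + \<phi>)) *v hist u r (\<phi> - \<tau>)) has_integral (x (r + \<sigma>) - x r)) {0..\<sigma>}"
      by (rule has_integral_eq[rotated]) (simp add: hist_def algebra_simps)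
  qed
  have Psi_id: "Psi X f g \<tau> \<sigma> (x r) (hist u r) = x (r + \<sigma>)" if r: "0 \<le> r" and \<sigma>: "\<sigma> \<in> {0..\<tau>}" for r \<sigma>
    unfolding Psi_def
  proof (rule the_equality)
    show "\<exists>p. psi_sol X f g \<tau> (x r) (hist u r) p \<and> p \<sigma> = x (r + \<sigma>)"
      using psol[OF r] by blast
    fix y assume "\<exists>p. psi_sol X f g \<tau> (x r) (hist u r) p \<and> p \<sigma> = y"
    then obtain p where p: "psi_sol X f g \<tau> (x r) (hist u r) p" "p \<sigma> = y" by blast
    have "\<forall>\<sigma>\<in>{0..\<tau>}. p \<sigma> = x (r + \<sigma>)"
      using psi_unique[OF fg(1) fg(2) tau hb[OF r] p(1) psol[OF r]] by simp
    then show "y = x (r + \<sigma>)" using p(2) \<sigma> by simp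
  qed
  have uU: "u t \<in> U" if t: "-\<tau> \<le> t" for t
  proof (cases "t < 0")
    case True
    then have "t \<in> {-\<tau>..<0}" using t by simp
    then show ?thesis using u0 unfolding Bset_def hist_def by simp
  next
    case False
    then have t0: "0 \<le> t" by simp
    have "u t = k (Psi X f g \<tau> \<tau> (x t) (hist u t))" using u_fb t0 by simp
    also have "\<dots> = k (x (t + \<tau>))" using Psi_id[OF t0, of \<tau>] tau by simp
    finally show ?thesis using k_U x_in t0 tau by simp
  qed
  have Bmem: "hist u r \<in> Bset \<tau> U" if r: "0 \<le> r" for r
    unfolding Bset_def
  proof (intro CollectI conjI)
    show "\<forall>\<theta>\<in>{-\<tau>..<0}. hist u r \<theta> \<in> U" unfolding hist_def using uU r by simp
    have "hist u r ` {-\<tau>..<0} \<subseteq> u ` {-\<tau>..}" unfolding hist_def using r by auto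
    then show "bounded (hist u r ` {-\<tau>..<0})" using u_bdd bounded_subset by blast
    from u_aec obtain N where N: "{t \<in> space lborel. \<not> (t \<in> {-\<tau><..} \<longrightarrow> isCont u t)} \<subseteq> N"
      "emeasure lborel N = 0" "N \<in> sets lborel" by (rule AE_E)
    have meas: "((+) r) \<in> measurable lborel borel" by measurable
    have NB: "N \<in> sets borel" using N(3) by simp
    have "emeasure (distr lborel borel ((+) r)) N = emeasure lborel (((+) r) -` N \<inter> space lborel)"
      by (rule emeasure_distr[OF meas NB])
    then have N'0: "emeasure lborel (((+) r) -` N \<inter> space lborel) = 0"
      using N(2) lborel_distr_plus[of r] by simp
    have N'm: "((+) r) -` N \<inter> space lborel \<in> sets lborel" by (rule measurable_sets[OF meas NB])
    show "AE \<theta> in lborel. \<theta> \<in> {-\<tau><..<0} \<longrightarrow> isCont (hist u r) \<theta>"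
    proof (rule AE_I[OF _ N'0 N'm])
      show "{\<theta> \<in> space lborel. \<not> (\<theta> \<in> {-\<tau><..<0} \<longrightarrow> isCont (hist u r) \<theta>)} \<subseteq> (+) r -` N \<inter> space lborel"
      proof
        fix \<theta> assume "\<theta> \<in> {\<theta> \<in> space lborel. \<not> (\<theta> \<in> {-\<tau><..<0} \<longrightarrow> isCont (hist u r) \<theta>)}"
        then have th: "\<theta> \<in> {-\<tau><..<0}" "\<not> isCont (hist u r) \<theta>" by auto
        have "\<not> isCont u (r + \<theta>)"
        proof
          assume "isCont u (r + \<theta>)"
          then have "isCont (\<lambda>\<theta>. u (r + \<theta>)) \<theta>"
            by (rule isCont_o2[where f="\<lambda>\<theta>. r + \<theta>" and g=u, rotated]) simp
          then show False using th(2) unfolding hist_def by simp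
        qed
        moreover have "r + \<theta> \<in> {-\<tau><..}" using th(1) r by simp
        ultimately have "r + \<theta> \<in> N" using N(1) by auto
        then show "\<theta> \<in> (+) r -` N \<inter> space lborel" by simp
      qed
    qed
  qed
  have xS0: "x \<sigma> \<in> S" if \<sigma>: "\<sigma> \<in> {0..\<tau>}" for \<sigma>
  proof -
    have "Psi X f g \<tau> \<sigma> x0 (hist u 0) \<in> S" using assm1 \<sigma> by blast
    moreover have "Psi X f g \<tau> \<sigma> x0 (hist u 0) = x \<sigma>" using Psi_id[of 0 \<sigma>] \<sigma> x_init by simp
    ultimately show ?thesis by simp
  qed
  have Gbound: "- \<alpha> (h (x r)) \<le> Dh (x r) \<bullet> ?F r" if r: "\<tau> \<le> r" "x (r - \<tau>) \<in> S" for r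
  proof -
    define q where "q = r - \<tau>"
    have q0: "0 \<le> q" using r q_def by simp
    have Pq: "Psi X f g \<tau> \<tau> (x q) (hist u q) = x r" using Psi_id[OF q0, of \<tau>] tau q_def by simp
    have "- \<alpha> (h (Psi X f g \<tau> \<tau> (x q) (hist u q))) \<le> hdot Dh f g (Psi X f g \<tau> \<tau> (x q) (hist u q)) (k (Psi X f g \<tau> \<tau> (x q) (hist u q)))"
      using k_cbf r(2) Bmem[OF q0] unfolding q_def by blast
    moreover have "u q = k (x r)" using u_fb q0 Pq by simp
    ultimately show ?thesis unfolding hdot_def using Pq q_def by simp
  qed
  have fc: "continuous_on X f" by (rule loc_lip_cont[OF X(1) fg(1)])
  have gc: "continuous_on X g" by (rule loc_lip_cont[OF X(1) fg(2)])
  have hc: "continuous_on X h"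
    by (rule continuous_at_imp_continuous_on) (use h_C1(1) has_derivative_continuous in blast)
  have xc: "continuous_on {0..T} x" if "0 \<le> T" for T
  proof -
    have eq: "x t = x0 + integral {0..t} ?F" if "t \<in> {0..T}" for t
      using integral_unique[of ?F "x t - x0" "{0..t}"] x_sol that by simp
    have "(?F has_integral (x T - x0)) {0..T}" using x_sol that by simp
    then have int: "?F integrable_on {0..T}" by blast
    have "continuous_on {0..T} (\<lambda>t. x0 + integral {0..t} ?F)"
      by (rule continuous_on_add[OF continuous_on_const indefinite_integral_continuous_1[OF int]])
    then show ?thesis using eq by (metis (no_types, lifting) continuous_on_eq)
  qed
  have Hc: "continuous_on {0..T} ?H" if "0 \<le> T" for T
    by (rule continuous_on_compose2[OF hc xc[OF that]]) (use x_in in auto)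
  show ?thesis
  proof (rule ccontr)
    assume "\<not> (\<forall>t\<ge>0. x t \<in> S)"
    then obtain t0 where t0: "0 \<le> t0" "x t0 \<notin> S" by blast
    define Bs where "Bs = {t. 0 \<le> t \<and> ?H t < 0}"
    have t0B: "t0 \<in> Bs" using t0 x_in S_def Bs_def by auto
    then have Bne: "Bs \<noteq> {}" by blast
    have bdd: "bdd_below Bs" unfolding Bs_def by (rule bdd_belowI[of _ 0]) simp
    define T where "T = Inf Bs"
    have Bgt: "\<tau> < b'" if "b' \<in> Bs" for b'
    proof (rule ccontr)
      assume "\<not> \<tau> < b'"
      then have "b' \<in> {0..\<tau>}" using that Bs_def by simp
      then have "x b' \<in> S" by (rule xS0)
      then show False using that Bs_def S_def by simp
    qed
    have Tt: "\<tau> \<le> T" unfolding T_def by (rule cInf_greatest[OF Bne]) (use Bgt less_imp_le in blast)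
    have T0: "0 < T" using Tt tau by simp
    have below: "0 \<le> ?H t" if "t \<in> {0..<T}" for t
    proof (rule ccontr)
      assume "\<not> 0 \<le> ?H t"
      then have "t \<in> Bs" using that Bs_def by simp
      then show False using cInf_lower[OF _ bdd] that T_def by fastforce
    qed
    have HT: "0 \<le> ?H T"
    proof -
      define C where "C = {0..T} \<inter> ?H -` {0..}"
      have "closed C" unfolding C_def
        by (rule continuous_closed_preimage[OF Hc]) (use T0 in auto)
      moreover have "{0..<T} \<subseteq> C" using below unfolding C_def by auto
      ultimately have "closure {0..<T} \<subseteq> C" by (rule closure_minimal[rotated])
      then have "T \<in> C" using T0 by auto
      then show ?thesis unfolding C_def by simp
    qed
    have Snon: "x t \<in> S" if "t \<in> {0..T}" for t
    proof (cases "t = T")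
      case True then show ?thesis using HT x_in T0 S_def by simp
    next
      case False then show ?thesis using below[of t] that x_in S_def by simp
    qed
    obtain \<epsilon> where \<epsilon>: "\<epsilon> > 0" "\<And>r. - \<epsilon> < r \<Longrightarrow> - a < ereal r"
    proof (cases a)
      case (real a')
      then have "a' > 0" using alpha unfolding ext_class_K_def by simp
      then show ?thesis using that[of a'] real by simp
    next
      case PInf then show ?thesis using that[of 1] by simp
    next
      case MInf then show ?thesis using alpha unfolding ext_class_K_def by simp
    qed
    define Tb where "Tb = T + \<tau> + 1"
    have Tb0: "0 \<le> Tb" using T0 tau Tb_def by simp
    have T_in: "T \<in> {0..Tb}" using T0 tau Tb_def by simp
    obtain \<delta> where \<delta>: "\<delta> > 0" "\<forall>t\<in>{0..Tb}. dist t T < \<delta> \<longrightarrow> dist (?H t) (?H T) < \<epsilon>"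
      using Hc[OF Tb0] T_in \<epsilon>(1) unfolding continuous_on_iff by blast
    define \<eta> where "\<eta> = min \<delta> \<tau>"
    have \<eta>0: "\<eta> > 0" using \<delta> tau \<eta>_def by simp
    have "Inf Bs < T + \<eta>" using T_def \<eta>0 by simp
    then obtain t1 where t1: "t1 \<in> Bs" "t1 < T + \<eta>" using cInf_less_iff[OF Bne bdd] by blast
    have Tt1: "T \<le> t1" using cInf_lower[OF t1(1) bdd] T_def by simp
    have Ht1: "?H t1 < 0" using t1 Bs_def by simp
    have Tlt1: "T < t1" using Tt1 Ht1 HT by (metis order_le_less not_le)
    define A where "A = {r\<in>{T..t1}. 0 \<le> ?H r}"
    have TA: "T \<in> A" using HT Tlt1 A_def by simp
    have Ane: "A \<noteq> {}" using TA by blast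
    have Abdd: "bdd_above A" unfolding A_def by (rule bdd_aboveI[of _ t1]) simp
    have Acl: "closed A"
    proof -
      have "continuous_on {T..t1} ?H"
        by (rule continuous_on_subset[OF Hc[OF Tb0]]) (use T0 t1 \<eta>_def Tb_def in auto)
      then have "closed ({T..t1} \<inter> ?H -` {0..})"
        by (rule continuous_closed_preimage) auto
      moreover have "A = {T..t1} \<inter> ?H -` {0..}" unfolding A_def by auto
      ultimately show ?thesis by simp
    qed
    define s0 where "s0 = Sup A"
    have s0A: "s0 \<in> A" unfolding s0_def by (rule closed_contains_Sup[OF Ane Abdd Acl])
    have Hs0: "0 \<le> ?H s0" and Ts0: "T \<le> s0" and s0t1: "s0 \<le> t1" using s0A A_def by auto
    have s0lt: "s0 < t1" using s0t1 Hs0 Ht1 by (metis order_le_less not_le)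
    have neg: "?H r < 0" if "r \<in> {s0<..t1}" for r
    proof (rule ccontr)
      assume "\<not> ?H r < 0"
      then have "r \<in> A" using that Ts0 A_def by simp
      then have "r \<le> s0" unfolding s0_def by (rule cSup_upper[OF _ Abdd])
      then show False using that by simp
    qed
    have rng: "\<tau> \<le> r \<and> x (r - \<tau>) \<in> S \<and> - \<epsilon> < ?H r \<and> r \<in> {0..Tb}" if "r \<in> {s0..t1}" for r
    proof -
      have r1: "T \<le> r" "r < T + \<eta>" using that Ts0 t1(2) by auto
      have "r - \<tau> \<in> {0..T}" using r1 Tt \<eta>_def by auto
      then have "x (r - \<tau>) \<in> S" by (rule Snon)
      moreover have rT: "r \<in> {0..Tb}" using r1 T0 \<eta>_def Tb_def by auto
      moreover have "dist r T < \<delta>" using r1 \<eta>_def by (simp add: dist_real_def)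
      then have "dist (?H r) (?H T) < \<epsilon>" using \<delta>(2) rT by blast
      then have "- \<epsilon> < ?H r" using HT by (simp add: dist_real_def)
      ultimately show ?thesis using r1 Tt by simp
    qed
    have alpha_mono: "strict_mono_on {r. - a < ereal r \<and> ereal r < b} \<alpha>" and alpha0: "\<alpha> 0 = 0"
      and a0: "0 < a" and b0: "0 < b" using alpha unfolding ext_class_K_def by auto
    have Gpos: "0 \<le> Dh (x r) \<bullet> ?F r" if "r \<in> {s0<..t1}" for r
    proof -
      have rr: "r \<in> {s0..t1}" using that by simp
      have Hn: "?H r < 0" by (rule neg[OF that])
      have "- \<epsilon> < ?H r" using rng[OF rr] by simp
      then have "- a < ereal (?H r)" by (rule \<epsilon>(2))
      moreover have "ereal (?H r) < b" using Hn b0 by (metis ereal_less(2) less_ereal.simps(1) order.strict_trans zero_ereal_def)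
      moreover have "- a < ereal 0" using a0 ereal_minus_less_minus[of a 0] by (simp add: zero_ereal_def[symmetric])
      moreover have "ereal 0 < b" using b0 by (simp add: zero_ereal_def[symmetric])
      ultimately have "\<alpha> (?H r) < \<alpha> 0" using Hn by (intro strict_mono_onD[OF alpha_mono]) auto
      then have "0 < - \<alpha> (?H r)" using alpha0 by simp
      also have "\<dots> \<le> Dh (x r) \<bullet> ?F r" using Gbound rng[OF rr] by blast
      finally show ?thesis by simp
    qed
    have sub: "{s0..t1} \<subseteq> {0..Tb}" using rng by blast
    have xcs: "continuous_on {s0..t1} x" by (rule continuous_on_subset[OF xc[OF Tb0] sub])
    have ximg: "x ` {s0..t1} \<subseteq> X" using x_in sub Tb0 by auto
    have cpt: "compact {s0..t1}" by simp
    have fb: "bounded ((\<lambda>t. f (x t)) ` {s0..t1})"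
      by (rule compact_imp_bounded[OF compact_continuous_image[OF continuous_on_compose2[OF fc xcs ximg] cpt]])
    have gb: "bounded ((\<lambda>t. g (x t)) ` {s0..t1})"
      by (rule compact_imp_bounded[OF compact_continuous_image[OF continuous_on_compose2[OF gc xcs ximg] cpt]])
    obtain Bf where Bf: "\<forall>z\<in>(\<lambda>t. f (x t)) ` {s0..t1}. norm z \<le> Bf" using fb unfolding bounded_iff by blast
    obtain Bg where Bg: "\<forall>z\<in>(\<lambda>t. g (x t)) ` {s0..t1}. norm z \<le> Bg" using gb unfolding bounded_iff by blast
    have Fb: "\<forall>t\<in>{s0..t1}. norm (?F t) \<le> Bf + real CARD('n) * Bg * max M 0"
    proof
      fix t assume t: "t \<in> {s0..t1}"
      have "norm (?F t) \<le> norm (f (x t)) + norm (g (x t) *v u (t - \<tau>))" by (rule norm_triangle_ineq)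
      also have "\<dots> \<le> Bf + real CARD('n) * Bg * max M 0"
      proof (rule add_mono)
        show "norm (f (x t)) \<le> Bf" using Bf t by simp
        have "norm (g (x t) *v u (t - \<tau>)) \<le> real CARD('n) * norm (g (x t)) * norm (u (t - \<tau>))"
          by (rule matvec_bound)
        also have "\<dots> \<le> real CARD('n) * Bg * max M 0"
        proof (intro mult_mono)
          show "norm (g (x t)) \<le> Bg" using Bg t by simp
          have "- \<tau> \<le> t - \<tau>" using rng[OF t] tau by simp
          then show "norm (u (t - \<tau>)) \<le> max M 0" using Mu by fastforce
          show "0 \<le> real CARD('n) * Bg" using Bg t by (meson mult_nonneg_nonneg of_nat_0_le_iff norm_ge_zero order_trans imageI)
        qed auto
        finally show "norm (g (x t) *v u (t - \<tau>)) \<le> real CARD('n) * Bg * max M 0" .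
      qed
      finally show "norm (?F t) \<le> Bf + real CARD('n) * Bg * max M 0" .
    qed
    have xF: "\<forall>t\<in>{s0..t1}. (?F has_integral (x t - x s0)) {s0..t}"
    proof
      fix t assume "t \<in> {s0..t1}"
      then show "(?F has_integral (x t - x s0)) {s0..t}" using betw[of s0 t] rng[of s0] s0lt by auto
    qed
    have hd: "\<forall>t\<in>{s0..t1}. (h has_derivative (\<lambda>v. Dh (x t) \<bullet> v)) (at (x t))"
      using h_C1(1) ximg by blast
    have Dc: "continuous_on {s0..t1} (\<lambda>t. Dh (x t))"
      by (rule continuous_on_compose2[OF h_C1(2) xcs ximg])
    have I: "((\<lambda>t. Dh (x t) \<bullet> ?F t) has_integral (?H t1 - ?H s0)) {s0..t1}"
      by (rule ftc_comp[OF s0lt xF Fb hd Dc])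
    have I': "((\<lambda>t. if t = s0 then 0 else Dh (x t) \<bullet> ?F t) has_integral (?H t1 - ?H s0)) {s0..t1}"
      by (rule has_integral_spike[OF negligible_sing[of s0] _ I]) simp
    have "0 \<le> ?H t1 - ?H s0"
      by (rule has_integral_nonneg[OF I']) (use Gpos in auto)
    then show False using Hs0 Ht1 by simp
  qed
qed


end
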